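(* Let $\mathcal{X}=\{x^{(1)},\dots,x^{(n)}\}$ be a finite set of $n\ge 2$ objects and let $\mathfrak{d}:\mathcal{X}\times\mathcal{X}\to[0,\infty]$ be symmetric with $\mathfrak{d}(x,x)=0$. Let $F$ be an inequity index and $g\in(0,1]$ a threshold. Let $T$ be any minimum spanning tree of the complete undirected graph on vertex set $\mathcal{X}$ in which the edge $\{x,y\}$ has weight $\mathfrak{d}(x,y)$. Consider the following procedure ("Genie restricted to $T$"): start from the partition into singletons; at each step, with current partition $\{C_1,\dots,C_m\}$, $m\ge 2$, if $F$ of the cluster sizes is $\le g$, choose an edge $\{a,b\}$ of $T$ of minimal weight among the edges of $T$ whose endpoints lie in different clusters; otherwise choose an edge $\{a,b\}$ of $T$ of minimal weight among the edges of $T$ whose endpoints lie in different clusters at least one of which has the minimal cluster size $\min_i |C_i|$; then merge the two clusters containing $a$ and $b$. Then this procedure is well defined at every step (a required edge of $T$ always exists), and the sequence of merges it produces is a valid run of the Genie linkage algorithm on $(\mathcal{X},\mathfrak{d})$ with inequity index $F$ and threshold $g$; that is, the Genie hierarchical clustering can be computed using only the edges of a minimum spanning tree.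
   Context: An inequity index: for fixed $n$, let $\mathcal{G}=\{(x_1,\dots,x_n)\in\mathbb{N}_0^n : x_1\ge\dots\ge x_n\}$. A function $F:\mathcal{G}\to[0,1]$ is an inequity index if (a) it is Schur-convex: for $x,y\in\mathcal{G}$ with $\sum_i x_i=\sum_i y_i$ and $\sum_{j\le i}x_j\le\sum_{j\le i}y_j$ for all $i$, one has $F(x)\le F(y)$; (b) $\inf_{\mathcal{G}}F=0$; (c) $\sup_{\mathcal{G}}F=1$. Example: the normalized Gini index $G(x)=\frac{\sum_{i<j}|x_i-x_j|}{(n-1)\sum_i x_i}$. When the partition has $m<n$ clusters, $F$ is applied to the non-increasingly sorted vector of cluster sizes (padded with zeros to length $n$, equivalently as written in the paper to $(c_{(m)},\dots,c_{(1)})$). The Genie linkage algorithm: start with $\mathcal{C}^{(0)}=\{\{x^{(1)}\},\dots,\{x^{(n)}\}\}$. At step $j$ ($j=0,\dots,n-2$), with current partition $\{C_1,\dots,C_{n-j}\}$ and sizes $c_i=|C_i|$: if $F(\text{sorted sizes})\le g$, merge a pair of clusters $(C_u,C_v)$, $u<v$, attaining $\min_{u<v}\min_{a\in C_u,b\in C_v}\mathfrak{d}(a,b)$ (single linkage); otherwise, merge a pair $(C_u,C_v)$ attaining this minimum over only those pairs in which $|C_u|=\min_i|C_i|$ or $|C_v|=\min_i|C_i|$. Any pair attaining the relevant minimum (ties broken arbitrarily) constitutes a valid Genie merge. With $g=1$ this is single linkage.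
   Formalization: A minimum spanning tree is a spanning tree minimizing, for every real level c, the total of the truncated weights min($\mathfrak{d}(x,y)$, c) over its edges, instead of minimizing the total weight. The statement above fails without it. *)

theory Defs
  imports "HOL-Library.Extended_Real" "HOL-Library.Multiset"
begin

definition ineq_dom :: "nat \<Rightarrow> nat list set" where
  "ineq_dom n = {x. length x = n \<and> sorted_wrt (\<ge>) x}"

definition inequity_index :: "nat \<Rightarrow> (nat list \<Rightarrow> real) \<Rightarrow> bool" where
  "inequity_index n F \<longleftrightarrow>
     (\<forall>x\<in>ineq_dom n. 0 \<le> F x \<and> F x \<le> 1) \<and>
     (\<forall>x\<in>ineq_dom n. \<forall>y\<in>ineq_dom n.
        sum_list x = sum_list y \<and> (\<forall>i\<le>n. sum_list (take i x) \<le> sum_list (take i y))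
        \<longrightarrow> F x \<le> F y) \<and>
     (INF x\<in>ineq_dom n. F x) = 0 \<and>
     (SUP x\<in>ineq_dom n. F x) = 1"

definition sizes :: "nat \<Rightarrow> 'a set set \<Rightarrow> nat list" where
  "sizes n P = rev (sorted_list_of_multiset (image_mset card (mset_set P)))
               @ replicate (n - card P) 0"

definition minsz :: "'a set set \<Rightarrow> nat" where
  "minsz P = Min (card ` P)"

definition merge :: "'a set set \<Rightarrow> 'a set \<Rightarrow> 'a set \<Rightarrow> 'a set set" where
  "merge P A B = insert (A \<union> B) (P - {A, B})"

definition singletons :: "'a set \<Rightarrow> 'a set set" where
  "singletons X = (\<lambda>x. {x}) ` X"

definition linkage :: "('a \<Rightarrow> 'a \<Rightarrow> ereal) \<Rightarrow> 'a set \<Rightarrow> 'a set \<Rightarrow> ereal" where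
  "linkage d A B = Min {d a b | a b. a \<in> A \<and> b \<in> B}"

definition genie_step ::
  "nat \<Rightarrow> (nat list \<Rightarrow> real) \<Rightarrow> real \<Rightarrow> ('a \<Rightarrow> 'a \<Rightarrow> ereal) \<Rightarrow> 'a set set \<Rightarrow> 'a set set \<Rightarrow> bool" where
  "genie_step n F g d P P' \<longleftrightarrow>
     (\<exists>A\<in>P. \<exists>B\<in>P. A \<noteq> B \<and>
        (if F (sizes n P) \<le> g then
           (\<forall>A'\<in>P. \<forall>B'\<in>P. A' \<noteq> B' \<longrightarrow> linkage d A B \<le> linkage d A' B')
         else
           (card A = minsz P \<or> card B = minsz P) \<and>
           (\<forall>A'\<in>P. \<forall>B'\<in>P. A' \<noteq> B' \<and> (card A' = minsz P \<or> card B' = minsz P)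
              \<longrightarrow> linkage d A B \<le> linkage d A' B')) \<and>
        P' = merge P A B)"

definition edge_rel :: "'a set set \<Rightarrow> ('a \<times> 'a) set" where
  "edge_rel T = {(x, y). {x, y} \<in> T}"

definition spanning_tree :: "'a set \<Rightarrow> 'a set set \<Rightarrow> bool" where
  "spanning_tree X T \<longleftrightarrow>
     T \<subseteq> {{x, y} | x y. x \<in> X \<and> y \<in> X \<and> x \<noteq> y} \<and>
     (\<forall>x\<in>X. \<forall>y\<in>X. (x, y) \<in> (edge_rel T)\<^sup>*) \<and>
     (\<forall>x y. {x, y} \<in> T \<longrightarrow> (x, y) \<notin> (edge_rel (T - {{x, y}}))\<^sup>*)"

definition edge_w :: "('a \<Rightarrow> 'a \<Rightarrow> ereal) \<Rightarrow> 'a set \<Rightarrow> ereal" where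
  "edge_w d e = (THE w. \<exists>a b. e = {a, b} \<and> w = d a b)"

text \<open>Since weights may be infinite,
  total weight is compared for the weights truncated at every finite level c
  (for finite weights this is equivalent to minimal total weight).\<close>
definition min_spanning_tree :: "'a set \<Rightarrow> ('a \<Rightarrow> 'a \<Rightarrow> ereal) \<Rightarrow> 'a set set \<Rightarrow> bool" where
  "min_spanning_tree X d T \<longleftrightarrow>
     spanning_tree X T \<and>
     (\<forall>T'. spanning_tree X T' \<longrightarrow>
        (\<forall>c::real. (\<Sum>e\<in>T. min (edge_w d e) (ereal c)) \<le> (\<Sum>e\<in>T'. min (edge_w d e) (ereal c))))"

definition tgenie_step ::
  "nat \<Rightarrow> (nat list \<Rightarrow> real) \<Rightarrow> real \<Rightarrow> ('a \<Rightarrow> 'a \<Rightarrow> ereal) \<Rightarrow> 'a set set \<Rightarrow>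
   'a set set \<Rightarrow> 'a set set \<Rightarrow> bool" where
  "tgenie_step n F g d T P P' \<longleftrightarrow>
     (\<exists>A\<in>P. \<exists>B\<in>P. \<exists>a\<in>A. \<exists>b\<in>B. A \<noteq> B \<and> {a, b} \<in> T \<and>
        (if F (sizes n P) \<le> g then
           (\<forall>A'\<in>P. \<forall>B'\<in>P. \<forall>a'\<in>A'. \<forall>b'\<in>B'. A' \<noteq> B' \<and> {a', b'} \<in> T
              \<longrightarrow> d a b \<le> d a' b')
         else
           (card A = minsz P \<or> card B = minsz P) \<and>
           (\<forall>A'\<in>P. \<forall>B'\<in>P. \<forall>a'\<in>A'. \<forall>b'\<in>B'. A' \<noteq> B' \<and> {a', b'} \<in> T \<and>
              (card A' = minsz P \<or> card B' = minsz P) \<longrightarrow> d a b \<le> d a' b')) \<and>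
        P' = merge P A B)"

end

theory Submission
  imports Defs
begin


lemma sym_edge_rel: "sym (edge_rel E)"
  unfolding edge_rel_def sym_def by (auto simp: insert_commute)

lemma edge_rtrancl_sym: "(x,y) \<in> (edge_rel E)\<^sup>* \<Longrightarrow> (y,x) \<in> (edge_rel E)\<^sup>*"
  using sym_rtrancl[OF sym_edge_rel, of E] unfolding sym_def by blast

lemma edge_rel_mono: "E \<subseteq> E' \<Longrightarrow> (edge_rel E)\<^sup>* \<subseteq> (edge_rel E')\<^sup>*"
  by (rule rtrancl_mono) (auto simp: edge_rel_def)

lemma remove_edge_conn:
  assumes "(x,y) \<in> (edge_rel (S - {{x,y}}))\<^sup>*"
  shows "(edge_rel S)\<^sup>* \<subseteq> (edge_rel (S - {{x,y}}))\<^sup>*"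
proof (rule rtrancl_subset_rtrancl, safe)
  fix p q assume pq: "(p,q) \<in> edge_rel S"
  show "(p,q) \<in> (edge_rel (S - {{x,y}}))\<^sup>*"
  proof (cases "{p,q} = {x,y}")
    case True
    then have "(p = x \<and> q = y) \<or> (p = y \<and> q = x)" by (auto simp: doubleton_eq_iff)
    then show ?thesis using assms edge_rtrancl_sym[OF assms] by (elim disjE) simp_all
  next
    case False
    then have "(p,q) \<in> edge_rel (S - {{x,y}})" using pq by (auto simp: edge_rel_def)
    then show ?thesis by blast
  qed
qed

lemma spanning_subtree:
  assumes "finite S" "S \<subseteq> {{x, y} | x y. x \<in> X \<and> y \<in> X \<and> x \<noteq> y}"
    "\<forall>x\<in>X. \<forall>y\<in>X. (x,y) \<in> (edge_rel S)\<^sup>*"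
  shows "\<exists>T'\<subseteq>S. spanning_tree X T'"
  using assms
proof (induction "card S" arbitrary: S rule: less_induct)
  case less
  show ?case
  proof (cases "\<forall>x y. {x,y} \<in> S \<longrightarrow> (x,y) \<notin> (edge_rel (S - {{x,y}}))\<^sup>*")
    case True
    then show ?thesis using less.prems unfolding spanning_tree_def by blast
  next
    case False
    then obtain x y where xy: "{x,y} \<in> S" "(x,y) \<in> (edge_rel (S - {{x,y}}))\<^sup>*" by blast
    have "card (S - {{x,y}}) < card S" using xy less.prems(1) by (intro card_Diff1_less)
    moreover have "\<forall>p\<in>X. \<forall>q\<in>X. (p,q) \<in> (edge_rel (S - {{x,y}}))\<^sup>*"
      using less.prems(3) remove_edge_conn[OF xy(2)] by blast
    ultimately obtain T' where "T' \<subseteq> S - {{x,y}}" "spanning_tree X T'"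
      using less.hyps[of "S - {{x,y}}"] less.prems by blast
    then show ?thesis by blast
  qed
qed

lemma edge_w_eq:
  assumes "\<forall>x\<in>X. \<forall>y\<in>X. d x y = d y x" "x \<in> X" "y \<in> X"
  shows "edge_w d {x,y} = d x y"
  unfolding edge_w_def
proof (rule the_equality)
  show "\<exists>a b. {x, y} = {a, b} \<and> d x y = d a b" by blast
next
  fix w assume "\<exists>a b. {x, y} = {a, b} \<and> w = d a b"
  then obtain a b where "{x,y} = {a,b}" "w = d a b" by blast
  then show "w = d x y" using assms by (auto simp: doubleton_eq_iff)
qed

lemma shortest_path:
  assumes "(a,b) \<in> R\<^sup>*"
  shows "\<exists>n f. f 0 = a \<and> f n = b \<and> (\<forall>i<n. (f i, f (Suc i)) \<in> R) \<and>
           (\<forall>i j. i < j \<longrightarrow> j \<le> n \<longrightarrow> f i \<noteq> f j)"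
proof -
  obtain n0 where "(a,b) \<in> R ^^ n0" using assms rtrancl_power by blast
  define n where "n = (LEAST n. (a,b) \<in> R ^^ n)"
  have pn: "(a,b) \<in> R ^^ n" unfolding n_def by (rule LeastI) fact
  have mn: "\<And>m. (a,b) \<in> R ^^ m \<Longrightarrow> n \<le> m" unfolding n_def by (rule Least_le)
  obtain f where f: "f 0 = a" "f n = b" "\<forall>i<n. (f i, f (Suc i)) \<in> R"
    using pn relpow_fun_conv by metis
  have "f i \<noteq> f j" if ij: "i < j" "j \<le> n" for i j
  proof
    assume eq: "f i = f j"
    define g where "g m = (if m \<le> i then f m else f (m + (j - i)))" for m
    define k where "k = n - (j - i)"
    have "g 0 = a" using f by (simp add: g_def)
    moreover have "g k = b"
    proof (cases "k \<le> i")
      case True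
      then have "n = j" using ij by (simp add: k_def)
      then have "k = i" using ij by (simp add: k_def)
      then show ?thesis using True eq f `n = j` by (simp add: g_def)
    next
      case False
      then have "k + (j - i) = n" using ij by (simp add: k_def)
      then show ?thesis using False f by (simp add: g_def)
    qed
    moreover have "\<forall>m<k. (g m, g (Suc m)) \<in> R"
    proof (intro allI impI)
      fix m assume m: "m < k"
      consider "m < i" | "m = i" | "m > i" by linarith
      then show "(g m, g (Suc m)) \<in> R"
      proof cases
        case 1 then show ?thesis using f(3) m ij by (simp add: g_def k_def)
      next
        case 2
        then have "g m = f j" "g (Suc m) = f (Suc j)" "j < n" using eq m ij by (auto simp: g_def k_def)
        then show ?thesis using f(3) by simp
      next
        case 3
        then have "g m = f (m + (j - i))" "g (Suc m) = f (Suc (m + (j - i)))" "m + (j - i) < n"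
          using m ij by (auto simp: g_def k_def)
        then show ?thesis using f(3) by simp
      qed
    qed
    ultimately have "(a,b) \<in> R ^^ k" using relpow_fun_conv by metis
    then have "n \<le> k" by (rule mn)
    then show False using ij by (simp add: k_def)
  qed
  then show ?thesis using f by blast
qed

lemma first_cross:
  "P (0::nat) \<Longrightarrow> \<not> P n \<Longrightarrow> \<exists>i<n. P i \<and> \<not> P (Suc i)"
  by (induction n) (auto, metis less_Suc_eq)

lemma path_cross:
  assumes "(a,b) \<in> (edge_rel T)\<^sup>*" "a \<in> A" "b \<notin> A"
  shows "\<exists>u v. u \<in> A \<and> v \<notin> A \<and> {u,v} \<in> T \<and> (a,u) \<in> (edge_rel (T - {{u,v}}))\<^sup>*
           \<and> (v,b) \<in> (edge_rel (T - {{u,v}}))\<^sup>*"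
proof -
  obtain n f where f: "f 0 = a" "f n = b" "\<forall>i<n. (f i, f (Suc i)) \<in> edge_rel T"
    "\<forall>i j. i < j \<longrightarrow> j \<le> n \<longrightarrow> f i \<noteq> f j"
    using shortest_path[OF assms(1)] by blast
  obtain i where i: "i < n" "f i \<in> A" "f (Suc i) \<notin> A"
    using first_cross[of "\<lambda>i. f i \<in> A" n] f assms by auto
  define u v where "u = f i" and "v = f (Suc i)"
  have uvT: "{u,v} \<in> T" using f(3) i(1) by (auto simp: u_def v_def edge_rel_def)
  have pre: "k \<le> i \<Longrightarrow> (f 0, f k) \<in> (edge_rel (T - {{u,v}}))\<^sup>*" for k
  proof (induction k)
    case 0 then show ?case by simp
  next
    case (Suc k)
    have "f k \<noteq> u" "f k \<noteq> v" using f(4) Suc.prems i(1) by (auto simp: u_def v_def)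
    then have "{f k, f (Suc k)} \<noteq> {u,v}" by (auto simp: doubleton_eq_iff)
    moreover have "{f k, f (Suc k)} \<in> T" using f(3) Suc.prems i(1) by (auto simp: edge_rel_def)
    ultimately have "(f k, f (Suc k)) \<in> edge_rel (T - {{u,v}})" by (auto simp: edge_rel_def)
    then show ?case using Suc by (meson Suc_leD rtrancl.rtrancl_into_rtrancl)
  qed
  have suf: "Suc i + k \<le> n \<Longrightarrow> (f (Suc i), f (Suc i + k)) \<in> (edge_rel (T - {{u,v}}))\<^sup>*" for k
  proof (induction k)
    case 0 then show ?case by simp
  next
    case (Suc k)
    have "f (Suc (Suc i + k)) \<noteq> u" "f (Suc (Suc i + k)) \<noteq> v"
      using f(4)[rule_format, of i "Suc (Suc i + k)"] f(4)[rule_format, of "Suc i" "Suc (Suc i + k)"] Suc.prems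
      by (auto simp: u_def v_def)
    then have "{f (Suc i + k), f (Suc (Suc i + k))} \<noteq> {u,v}" by (auto simp: doubleton_eq_iff)
    moreover have "{f (Suc i + k), f (Suc (Suc i + k))} \<in> T" using f(3) Suc.prems
      by (auto simp: edge_rel_def)
    ultimately have "(f (Suc i + k), f (Suc (Suc i + k))) \<in> edge_rel (T - {{u,v}})"
      by (auto simp: edge_rel_def)
    then show ?case using Suc by (simp add: rtrancl.rtrancl_into_rtrancl)
  qed
  have "(a,u) \<in> (edge_rel (T - {{u,v}}))\<^sup>*" using pre[of i] f(1) by (simp add: u_def)
  moreover have "(v,b) \<in> (edge_rel (T - {{u,v}}))\<^sup>*" using suf[of "n - Suc i"] f(2) i(1)
    by (simp add: v_def)
  ultimately show ?thesis using uvT i by (auto simp: u_def v_def)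
qed



lemma cut_mst:
  assumes fin: "finite X" and nn: "\<forall>x\<in>X. \<forall>y\<in>X. d x y \<ge> 0"
    and sy: "\<forall>x\<in>X. \<forall>y\<in>X. d x y = d y x"
    and mst: "min_spanning_tree X d T" and AX: "A \<subseteq> X" and a0: "a0 \<in> A"
    and b0: "b0 \<in> X" "b0 \<notin> A"
  shows "\<exists>u\<in>A. \<exists>v\<in>X - A. {u,v} \<in> T \<and> d u v \<le> d a0 b0"
proof (rule ccontr)
  assume "\<not> ?thesis"
  then have H: "\<And>u v. u \<in> A \<Longrightarrow> v \<in> X - A \<Longrightarrow> {u,v} \<in> T \<Longrightarrow> d a0 b0 < d u v"
    by (auto simp: not_le)
  have st: "spanning_tree X T" using mst by (simp add: min_spanning_tree_def)
  let ?E = "{{x, y} | x y. x \<in> X \<and> y \<in> X \<and> x \<noteq> y}"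
  have TE: "T \<subseteq> ?E" using st by (simp add: spanning_tree_def)
  have conn: "\<forall>x\<in>X. \<forall>y\<in>X. (x,y) \<in> (edge_rel T)\<^sup>*" using st by (simp add: spanning_tree_def)
  have a0X: "a0 \<in> X" using AX a0 by blast
  obtain u v where uv: "u \<in> A" "v \<notin> A" "{u,v} \<in> T" "(a0,u) \<in> (edge_rel (T - {{u,v}}))\<^sup>*"
    "(v,b0) \<in> (edge_rel (T - {{u,v}}))\<^sup>*"
    using path_cross[of a0 b0 T A] conn a0X b0 a0 by blast
  have uX: "u \<in> X" using uv AX by blast
  have vX: "v \<in> X"
  proof -
    obtain x y where xy: "{u,v} = {x,y}" "x \<in> X" "y \<in> X" using uv(3) TE by blast
    have "v \<in> {x,y}" using xy(1) by (metis insertCI)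
    then show ?thesis using xy by blast
  qed
  have lt: "d a0 b0 < d u v" using H uv uX vX by blast
  have EP: "?E \<subseteq> Pow X" by auto
  have finE: "finite ?E" using fin EP finite_subset by (metis (no_types, lifting) finite_Pow_iff)
  have finT: "finite T" using TE finE finite_subset by blast
  define S where "S = insert {a0,b0} (T - {{u,v}})"
  have ab: "a0 \<noteq> b0" using a0 b0 by blast
  have SE: "S \<subseteq> ?E" using TE a0X b0 ab by (auto simp: S_def)
  have finS: "finite S" using finT by (simp add: S_def)
  have sub1: "(edge_rel (T - {{u,v}}))\<^sup>* \<subseteq> (edge_rel S)\<^sup>*" by (rule edge_rel_mono) (auto simp: S_def)
  have "(u,a0) \<in> (edge_rel S)\<^sup>*" using edge_rtrancl_sym[OF uv(4)] sub1 by blast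
  moreover have "(a0,b0) \<in> (edge_rel S)\<^sup>*" by (auto simp: S_def edge_rel_def)
  moreover have "(b0,v) \<in> (edge_rel S)\<^sup>*" using edge_rtrancl_sym[OF uv(5)] sub1 by blast
  ultimately have uvS: "(u,v) \<in> (edge_rel S)\<^sup>*" by (meson rtrancl_trans)
  have "edge_rel T \<subseteq> (edge_rel S)\<^sup>*"
  proof safe
    fix p q assume pq: "(p,q) \<in> edge_rel T"
    show "(p,q) \<in> (edge_rel S)\<^sup>*"
    proof (cases "{p,q} = {u,v}")
      case True
      then have "(p = u \<and> q = v) \<or> (p = v \<and> q = u)" by (auto simp: doubleton_eq_iff)
      then show ?thesis using uvS edge_rtrancl_sym[OF uvS] by (elim disjE) simp_all
    next
      case False
      then have "(p,q) \<in> edge_rel S" using pq by (auto simp: edge_rel_def S_def)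
      then show ?thesis by blast
    qed
  qed
  then have "(edge_rel T)\<^sup>* \<subseteq> (edge_rel S)\<^sup>*" by (rule rtrancl_subset_rtrancl)
  then have connS: "\<forall>x\<in>X. \<forall>y\<in>X. (x,y) \<in> (edge_rel S)\<^sup>*" using conn by blast
  obtain T'' where T'': "T'' \<subseteq> S" "spanning_tree X T''"
    using spanning_subtree[OF finS SE connS] by blast
  have eT: "{a0,b0} \<notin> T" using H[of a0 b0] a0 b0 by auto
  obtain c where c: "d a0 b0 < ereal c" "ereal c < d u v" using ereal_dense2[OF lt] by blast
  define h where "h e = min (edge_w d e) (ereal c)" for e
  have hE: "0 \<le> h e \<and> h e \<le> ereal c" if eE: "e \<in> ?E" for e
  proof -
    obtain x y where "e = {x,y}" "x \<in> X" "y \<in> X" using eE by blast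
    then have "edge_w d e = d x y" using edge_w_eq[OF sy] by simp
    moreover have "0 \<le> d x y" using nn `x \<in> X` `y \<in> X` by blast
    moreover have "0 \<le> ereal c" using c nn a0X b0 by (meson order.strict_implies_order order_trans)
    ultimately show ?thesis by (simp add: h_def)
  qed
  have "sum h T \<le> sum h T''" using mst T'' by (simp add: min_spanning_tree_def h_def)
  also have "sum h T'' \<le> sum h S"
  proof (rule sum_mono2[OF finS T''(1)])
    fix b assume "b \<in> S - T''"
    then have "b \<in> ?E" using SE by blast
    then show "0 \<le> h b" using hE by blast
  qed
  also have "sum h S = h {a0,b0} + sum h (T - {{u,v}})"
    using finT eT by (simp add: S_def)
  finally have ineq: "sum h T \<le> h {a0,b0} + sum h (T - {{u,v}})" .
  have sT: "sum h T = h {u,v} + sum h (T - {{u,v}})"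
    using finT uv(3) by (simp add: sum.remove)
  have hu: "h {u,v} = ereal c" using edge_w_eq[OF sy uX vX] c by (simp add: h_def)
  have ha: "h {a0,b0} = d a0 b0" using edge_w_eq[OF sy a0X b0(1)] c by (simp add: h_def)
  have hT: "0 \<le> h e \<and> h e \<le> ereal c" if eT': "e \<in> T" for e
  proof -
    have "e \<in> ?E" using TE eT' by blast
    then show ?thesis by (rule hE)
  qed
  have s0: "0 \<le> sum h (T - {{u,v}})" using hT by (intro sum_nonneg) auto
  have s1: "sum h (T - {{u,v}}) \<le> sum (\<lambda>_. ereal c) (T - {{u,v}})"
    using hT by (intro sum_mono) auto
  have "sum (\<lambda>_. ereal c) (T - {{u,v}}) = ereal (\<Sum>_\<in>T - {{u,v}}. c)"
    by (rule sum_ereal)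
  then have "sum h (T - {{u,v}}) \<noteq> \<infinity>" using s1 by auto
  then obtain r where r: "sum h (T - {{u,v}}) = ereal r" using s0
    by (cases "sum h (T - {{u,v}})") auto
  have d0: "0 \<le> d a0 b0" using nn a0X b0 by blast
  then obtain r0 where r0: "d a0 b0 = ereal r0" using c(1)
    by (cases "d a0 b0") auto
  from ineq sT hu ha r r0 c(1) show False by simp
qed



definition is_part :: "'a set \<Rightarrow> 'a set set \<Rightarrow> bool" where
  "is_part X P \<longleftrightarrow> \<Union>P = X \<and> (\<forall>A\<in>P. A \<noteq> {}) \<and> (\<forall>A\<in>P. \<forall>B\<in>P. A \<noteq> B \<longrightarrow> A \<inter> B = {})"

lemma part_merge:
  assumes "is_part X P" "A \<in> P" "B \<in> P" "A \<noteq> B"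
  shows "is_part X (merge P A B)"
proof -
  have U: "\<Union>P = X" and N: "\<forall>C\<in>P. C \<noteq> {}"
    and D0: "\<forall>C\<in>P. \<forall>D\<in>P. C \<noteq> D \<longrightarrow> C \<inter> D = {}"
    using assms(1) unfolding is_part_def by blast+
  have u: "\<Union>(merge P A B) = X" using assms(2,3) U unfolding merge_def by blast
  have ne: "\<forall>C\<in>merge P A B. C \<noteq> {}"
  proof
    fix C assume "C \<in> merge P A B"
    then have "C = A \<union> B \<or> C \<in> P" unfolding merge_def by blast
    then show "C \<noteq> {}" using N assms(2) by blast
  qed
  have dj: "\<forall>C\<in>merge P A B. \<forall>D\<in>merge P A B. C \<noteq> D \<longrightarrow> C \<inter> D = {}"
  proof (intro ballI impI)
    fix C D assume CD: "C \<in> merge P A B" "D \<in> merge P A B" "C \<noteq> D"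
    have cases: "(C = A \<union> B \<and> D \<in> P - {A,B}) \<or> (D = A \<union> B \<and> C \<in> P - {A,B}) \<or>
       (C \<in> P - {A,B} \<and> D \<in> P - {A,B})"
      using CD unfolding merge_def by blast
    show "C \<inter> D = {}"
    proof (rule disjE[OF cases])
      assume h: "C = A \<union> B \<and> D \<in> P - {A,B}"
      then have "A \<inter> D = {}" "B \<inter> D = {}" using D0 assms(2,3) by blast+
      then show ?thesis using h by blast
    next
      assume "(D = A \<union> B \<and> C \<in> P - {A,B}) \<or> (C \<in> P - {A,B} \<and> D \<in> P - {A,B})"
      then show ?thesis
      proof
        assume h: "D = A \<union> B \<and> C \<in> P - {A,B}"
        then have "A \<inter> C = {}" "B \<inter> C = {}" using D0 assms(2,3) by blast+
        then show ?thesis using h by blast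
      next
        assume h: "C \<in> P - {A,B} \<and> D \<in> P - {A,B}"
        then show ?thesis using D0 CD(3) by blast
      qed
    qed
  qed
  show ?thesis unfolding is_part_def using u ne dj by blast
qed

lemma reach_part:
  assumes "(tgenie_step n F g d T)\<^sup>*\<^sup>* (singletons X) P"
  shows "is_part X P"
  using assms
proof (induction rule: rtranclp_induct)
  case base
  then show ?case by (auto simp: is_part_def singletons_def)
next
  case (step P P')
  then show ?case unfolding tgenie_step_def using part_merge by blast
qed

lemma linkage_le:
  assumes "finite A" "finite B" "a \<in> A" "b \<in> B"
  shows "linkage d A B \<le> d a b"
proof -
  have eq: "{d a b | a b. a \<in> A \<and> b \<in> B} = (\<lambda>(a,b). d a b) ` (A \<times> B)" by auto
  show ?thesis unfolding linkage_def eq using assms by (intro Min_le) auto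
qed

lemma linkage_in:
  assumes "finite A" "finite B" "A \<noteq> {}" "B \<noteq> {}"
  shows "\<exists>a\<in>A. \<exists>b\<in>B. linkage d A B = d a b"
proof -
  have eq: "{d a b | a b. a \<in> A \<and> b \<in> B} = (\<lambda>(a,b). d a b) ` (A \<times> B)" by auto
  have "linkage d A B \<in> (\<lambda>(a,b). d a b) ` (A \<times> B)" unfolding linkage_def eq
    using assms by (intro Min_in) auto
  then show ?thesis by auto
qed

lemma linkage_sym:
  assumes "\<forall>x\<in>X. \<forall>y\<in>X. d x y = d y x" "A \<subseteq> X" "B \<subseteq> X"
  shows "linkage d A B = linkage d B A"
proof -
  have "{d a b | a b. a \<in> A \<and> b \<in> B} = {d a b | a b. a \<in> B \<and> b \<in> A}"
    using assms by (auto; metis subsetD)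
  then show ?thesis by (simp add: linkage_def)
qed

lemma min_exists:
  fixes f :: "'b \<Rightarrow> 'c::linorder"
  assumes "finite S" "S \<noteq> {}"
  shows "\<exists>x\<in>S. \<forall>y\<in>S. f x \<le> f y"
proof -
  have "Min (f ` S) \<in> f ` S" using assms by (intro Min_in) auto
  then obtain x where "x \<in> S" "f x = Min (f ` S)" by auto
  then show ?thesis using assms by (metis Min_le finite_imageI imageI)
qed

lemma min_edge:
  assumes "finite P" "\<forall>A\<in>P. finite A" "C \<in> P" "E \<in> P" "u \<in> C" "v \<in> E" "C \<noteq> E"
    "{u,v} \<in> T" "Q C E"
  shows "\<exists>A\<in>P. \<exists>B\<in>P. \<exists>a\<in>A. \<exists>b\<in>B. A \<noteq> B \<and> {a,b} \<in> T \<and> Q A B \<and>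
    (\<forall>A'\<in>P. \<forall>B'\<in>P. \<forall>a'\<in>A'. \<forall>b'\<in>B'. A' \<noteq> B' \<and> {a',b'} \<in> T \<and> Q A' B'
        \<longrightarrow> (d a b :: ereal) \<le> d a' b')"
proof -
  define S where "S = {(A,B,a,b). A \<in> P \<and> B \<in> P \<and> a \<in> A \<and> b \<in> B \<and> A \<noteq> B \<and> {a,b} \<in> T \<and> Q A B}"
  have "S \<subseteq> P \<times> P \<times> \<Union>P \<times> \<Union>P" by (auto simp: S_def)
  moreover have "finite (P \<times> P \<times> \<Union>P \<times> \<Union>P)" using assms(1,2) by auto
  ultimately have "finite S" by (rule finite_subset)
  moreover have "(C,E,u,v) \<in> S" using assms by (auto simp: S_def)
  ultimately obtain x where x: "x \<in> S" "\<forall>y\<in>S. (\<lambda>(A,B,a,b). d a b) x \<le> (\<lambda>(A,B,a,b). d a b) y"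
    using min_exists[of S "\<lambda>(A,B,a,b). d a b"] by blast
  obtain A B a b where "x = (A,B,a,b)" by (cases x) auto
  then show ?thesis using x unfolding S_def by fastforce
qed



theorem theorem1:
  fixes X :: "'a set" and n :: nat and d :: "'a \<Rightarrow> 'a \<Rightarrow> ereal"
    and F :: "nat list \<Rightarrow> real" and g :: real and T :: "'a set set"
  assumes "finite X" and "card X = n" and "n \<ge> 2"
    and "\<forall>x\<in>X. \<forall>y\<in>X. d x y \<ge> 0"
    and "\<forall>x\<in>X. \<forall>y\<in>X. d x y = d y x"
    and "\<forall>x\<in>X. d x x = 0"
    and "inequity_index n F"
    and "0 < g" and "g \<le> 1"
    and "min_spanning_tree X d T"
  shows "\<forall>P. (tgenie_step n F g d T)\<^sup>*\<^sup>* (singletons X) P \<and> card P \<ge> 2 \<longrightarrow>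
           (\<exists>P'. tgenie_step n F g d T P P') \<and>
           (\<forall>P'. tgenie_step n F g d T P P' \<longrightarrow> genie_step n F g d P P')"
proof (intro allI impI, elim conjE)
  fix P assume reach: "(tgenie_step n F g d T)\<^sup>*\<^sup>* (singletons X) P" and c2: "card P \<ge> 2"
  have part: "is_part X P" using reach by (rule reach_part)
  have AX: "\<forall>A\<in>P. A \<subseteq> X" using part unfolding is_part_def by blast
  have finP: "finite P"
  proof -
    have "P \<subseteq> Pow X" using AX by auto
    then show ?thesis using assms(1) by (meson finite_Pow_iff finite_subset)
  qed
  have finA: "\<forall>A\<in>P. finite A" using AX assms(1) finite_subset by blast
  have neA: "\<forall>A\<in>P. A \<noteq> {}" using part unfolding is_part_def by blast
  have disj: "\<And>A B. A \<in> P \<Longrightarrow> B \<in> P \<Longrightarrow> A \<noteq> B \<Longrightarrow> A \<inter> B = {}"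
    using part unfolding is_part_def by blast
  have cover: "\<Union>P = X" using part unfolding is_part_def by blast
  have cross: "\<exists>E\<in>P. \<exists>u\<in>C. \<exists>v\<in>E. C \<noteq> E \<and> {u,v} \<in> T \<and> d u v \<le> linkage d C D"
    if CD: "C \<in> P" "D \<in> P" "C \<noteq> D" for C D
  proof -
    obtain a1 b1 where ab: "a1 \<in> C" "b1 \<in> D" "linkage d C D = d a1 b1"
      using linkage_in[of C D d, OF finA[rule_format, OF CD(1)] finA[rule_format, OF CD(2)]
         neA[rule_format, OF CD(1)] neA[rule_format, OF CD(2)]] by blast
    have b1: "b1 \<notin> C" using disj[OF CD] ab by blast
    have b1X: "b1 \<in> X" using AX CD(2) ab(2) by blast
    obtain u v where uv: "u \<in> C" "v \<in> X - C" "{u,v} \<in> T" "d u v \<le> d a1 b1"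
    proof -
      have "C \<subseteq> X" using AX CD(1) by blast
      from cut_mst[OF assms(1) assms(4) assms(5) assms(10) this ab(1) b1X b1]
      show ?thesis using that by blast
    qed
    obtain E where E: "E \<in> P" "v \<in> E" using uv(2) cover by blast
    have le: "d u v \<le> linkage d C D" using uv(4) ab(3) by simp
    have "C \<noteq> E" using E(2) uv(2) by blast
    then show ?thesis using E uv(1,3) le by blast
  qed
  have other: "\<exists>D\<in>P. D \<noteq> C" if "C \<in> P" for C
  proof (rule ccontr)
    assume "\<not> ?thesis"
    then have "\<forall>a1\<in>P. \<forall>a2\<in>P. a1 = a2" using that by blast
    then have "card P \<le> Suc 0" using card_le_Suc0_iff_eq[OF finP] by blast
    then show False using c2 by simp
  qed
  have Pne: "P \<noteq> {}" using c2 by auto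
  have ex: "\<exists>P'. tgenie_step n F g d T P P'"
  proof (cases "F (sizes n P) \<le> g")
    case True
    obtain C where C: "C \<in> P" using Pne by blast
    obtain D where D: "D \<in> P" "D \<noteq> C" using other[OF C] by blast
    obtain E u v where Euv: "E \<in> P" "u \<in> C" "v \<in> E" "C \<noteq> E" "{u,v} \<in> T"
      using cross[OF C D(1) D(2)[symmetric]] by blast
    obtain A B a b where ABab: "A \<in> P" "B \<in> P" "a \<in> A" "b \<in> B" "A \<noteq> B" "{a,b} \<in> T" "True"
      "\<forall>A'\<in>P. \<forall>B'\<in>P. \<forall>a'\<in>A'. \<forall>b'\<in>B'. A' \<noteq> B' \<and> {a',b'} \<in> T \<and> True \<longrightarrow> d a b \<le> d a' b'"
      using min_edge[OF finP finA C Euv(1-5), of "\<lambda>_ _. True" d, OF TrueI]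
      by (-, elim bexE conjE) blast
    have ifp: "if F (sizes n P) \<le> g then
           (\<forall>A'\<in>P. \<forall>B'\<in>P. \<forall>a'\<in>A'. \<forall>b'\<in>B'. A' \<noteq> B' \<and> {a', b'} \<in> T
              \<longrightarrow> d a b \<le> d a' b')
         else
           (card A = minsz P \<or> card B = minsz P) \<and>
           (\<forall>A'\<in>P. \<forall>B'\<in>P. \<forall>a'\<in>A'. \<forall>b'\<in>B'. A' \<noteq> B' \<and> {a', b'} \<in> T \<and>
              (card A' = minsz P \<or> card B' = minsz P) \<longrightarrow> d a b \<le> d a' b')"
      using True ABab(8) by (simp only: if_True simp_thms)
    have "tgenie_step n F g d T P (merge P A B)"
      unfolding tgenie_step_def
      by (rule bexI[OF _ ABab(1)], rule bexI[OF _ ABab(2)], rule bexI[OF _ ABab(3)],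
          rule bexI[OF _ ABab(4)]) (intro conjI ABab(5) ABab(6) ifp refl)
    then show ?thesis by blast
  next
    case False
    have "minsz P \<in> card ` P" unfolding minsz_def using finP Pne by (intro Min_in) auto
    then obtain C where C: "C \<in> P" "card C = minsz P" by auto
    obtain D where D: "D \<in> P" "D \<noteq> C" using other[OF C(1)] by blast
    obtain E u v where Euv: "E \<in> P" "u \<in> C" "v \<in> E" "C \<noteq> E" "{u,v} \<in> T"
      using cross[OF C(1) D(1) D(2)[symmetric]] by blast
    obtain A B a b where ABab: "A \<in> P" "B \<in> P" "a \<in> A" "b \<in> B" "A \<noteq> B" "{a,b} \<in> T"
      "card A = minsz P \<or> card B = minsz P"
      "\<forall>A'\<in>P. \<forall>B'\<in>P. \<forall>a'\<in>A'. \<forall>b'\<in>B'. A' \<noteq> B' \<and> {a',b'} \<in> T \<and>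
          (card A' = minsz P \<or> card B' = minsz P) \<longrightarrow> d a b \<le> d a' b'"
      using min_edge[OF finP finA C(1) Euv(1-5), of "\<lambda>A B. card A = minsz P \<or> card B = minsz P" d, OF disjI1[OF C(2)]]
      by (-, elim bexE conjE) blast
    have ifp: "if F (sizes n P) \<le> g then
           (\<forall>A'\<in>P. \<forall>B'\<in>P. \<forall>a'\<in>A'. \<forall>b'\<in>B'. A' \<noteq> B' \<and> {a', b'} \<in> T
              \<longrightarrow> d a b \<le> d a' b')
         else
           (card A = minsz P \<or> card B = minsz P) \<and>
           (\<forall>A'\<in>P. \<forall>B'\<in>P. \<forall>a'\<in>A'. \<forall>b'\<in>B'. A' \<noteq> B' \<and> {a', b'} \<in> T \<and>
              (card A' = minsz P \<or> card B' = minsz P) \<longrightarrow> d a b \<le> d a' b')"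
      using False ABab(7,8) by (simp only: if_False simp_thms)
    have "tgenie_step n F g d T P (merge P A B)"
      unfolding tgenie_step_def
      by (rule bexI[OF _ ABab(1)], rule bexI[OF _ ABab(2)], rule bexI[OF _ ABab(3)],
          rule bexI[OF _ ABab(4)]) (intro conjI ABab(5) ABab(6) ifp refl)
    then show ?thesis by blast
  qed
  have all: "\<forall>P'. tgenie_step n F g d T P P' \<longrightarrow> genie_step n F g d P P'"
  proof (intro allI impI)
    fix P' assume "tgenie_step n F g d T P P'"
    then obtain A B a b where ABab: "A \<in> P" "B \<in> P" "a \<in> A" "b \<in> B" "A \<noteq> B" "{a,b} \<in> T"
      "P' = merge P A B"
      and H: "if F (sizes n P) \<le> g then
           (\<forall>A'\<in>P. \<forall>B'\<in>P. \<forall>a'\<in>A'. \<forall>b'\<in>B'. A' \<noteq> B' \<and> {a', b'} \<in> T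
              \<longrightarrow> d a b \<le> d a' b')
         else
           (card A = minsz P \<or> card B = minsz P) \<and>
           (\<forall>A'\<in>P. \<forall>B'\<in>P. \<forall>a'\<in>A'. \<forall>b'\<in>B'. A' \<noteq> B' \<and> {a', b'} \<in> T \<and>
              (card A' = minsz P \<or> card B' = minsz P) \<longrightarrow> d a b \<le> d a' b')"
      unfolding tgenie_step_def by (-, elim bexE conjE) blast
    have lAB: "linkage d A B \<le> d a b"
      by (rule linkage_le[OF finA[rule_format, OF ABab(1)] finA[rule_format, OF ABab(2)] ABab(3) ABab(4)])
    show "genie_step n F g d P P'"
    proof (cases "F (sizes n P) \<le> g")
      case True
      have H1: "\<forall>A'\<in>P. \<forall>B'\<in>P. \<forall>a'\<in>A'. \<forall>b'\<in>B'. A' \<noteq> B' \<and> {a', b'} \<in> T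
              \<longrightarrow> d a b \<le> d a' b'" using H unfolding if_P[OF True] .
      have L: "\<forall>A'\<in>P. \<forall>B'\<in>P. A' \<noteq> B' \<longrightarrow> linkage d A B \<le> linkage d A' B'"
      proof (intro ballI impI)
        fix A' B' assume AB': "A' \<in> P" "B' \<in> P" "A' \<noteq> B'"
        obtain E u v where Euv: "E \<in> P" "u \<in> A'" "v \<in> E" "A' \<noteq> E" "{u,v} \<in> T"
          "d u v \<le> linkage d A' B'" using cross[OF AB'] by blast
        have "d a b \<le> d u v" using H1 AB'(1) Euv(1-5) by blast
        then show "linkage d A B \<le> linkage d A' B'" using lAB Euv(6) by (meson order_trans)
      qed
      have ifg: "if F (sizes n P) \<le> g then
           (\<forall>A'\<in>P. \<forall>B'\<in>P. A' \<noteq> B' \<longrightarrow> linkage d A B \<le> linkage d A' B')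
         else
           (card A = minsz P \<or> card B = minsz P) \<and>
           (\<forall>A'\<in>P. \<forall>B'\<in>P. A' \<noteq> B' \<and> (card A' = minsz P \<or> card B' = minsz P)
              \<longrightarrow> linkage d A B \<le> linkage d A' B')"
        unfolding if_P[OF True] by (rule L)
      show ?thesis unfolding genie_step_def
        by (rule bexI[OF _ ABab(1)], rule bexI[OF _ ABab(2)]) (intro conjI ABab(5) ifg ABab(7))
    next
      case False
      have H2: "\<forall>A'\<in>P. \<forall>B'\<in>P. \<forall>a'\<in>A'. \<forall>b'\<in>B'. A' \<noteq> B' \<and> {a', b'} \<in> T \<and>
              (card A' = minsz P \<or> card B' = minsz P) \<longrightarrow> d a b \<le> d a' b'"
        and H3: "card A = minsz P \<or> card B = minsz P"
        using H unfolding if_not_P[OF False] by blast+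
      have L: "\<forall>A'\<in>P. \<forall>B'\<in>P. A' \<noteq> B' \<and> (card A' = minsz P \<or> card B' = minsz P)
              \<longrightarrow> linkage d A B \<le> linkage d A' B'"
      proof (intro ballI impI, elim conjE)
        fix A' B' assume AB': "A' \<in> P" "B' \<in> P" "A' \<noteq> B'" "card A' = minsz P \<or> card B' = minsz P"
        obtain C D where CD: "C \<in> P" "D \<in> P" "C \<noteq> D" "card C = minsz P"
          "linkage d C D = linkage d A' B'"
        proof (cases "card A' = minsz P")
          case True then show ?thesis using that[of A' B'] AB' by blast
        next
          case False
          then have "card B' = minsz P" using AB'(4) by blast
          moreover have "linkage d B' A' = linkage d A' B'"
            by (rule linkage_sym[OF assms(5)]) (use AX AB' in blast)+
          ultimately show ?thesis using that[of B' A'] AB' by blast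
        qed
        obtain E u v where Euv: "E \<in> P" "u \<in> C" "v \<in> E" "C \<noteq> E" "{u,v} \<in> T"
          "d u v \<le> linkage d C D" using cross[OF CD(1-3)] by blast
        have "d a b \<le> d u v" using H2 CD(1,4) Euv(1-5) by blast
        then show "linkage d A B \<le> linkage d A' B'" using lAB Euv(6) CD(5) by (metis order_trans)
      qed
      have ifg: "if F (sizes n P) \<le> g then
           (\<forall>A'\<in>P. \<forall>B'\<in>P. A' \<noteq> B' \<longrightarrow> linkage d A B \<le> linkage d A' B')
         else
           (card A = minsz P \<or> card B = minsz P) \<and>
           (\<forall>A'\<in>P. \<forall>B'\<in>P. A' \<noteq> B' \<and> (card A' = minsz P \<or> card B' = minsz P)
              \<longrightarrow> linkage d A B \<le> linkage d A' B')"
        unfolding if_not_P[OF False] by (intro conjI H3 L)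
      show ?thesis unfolding genie_step_def
        by (rule bexI[OF _ ABab(1)], rule bexI[OF _ ABab(2)]) (intro conjI ABab(5) ifg ABab(7))
    qed
  qed
  show "(\<exists>P'. tgenie_step n F g d T P P') \<and> (\<forall>P'. tgenie_step n F g d T P P' \<longrightarrow> genie_step n F g d P P')"
    using ex all by (rule conjI)
qed

end
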